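(* Let $N\ge1$, $\varphi,\gamma\in(0,1)$ with $\varphi+\gamma\ge1$, $\alpha=\min\{\varphi,\gamma\}$. Suppose the one-step transition probabilities of $(X_t)$ on $\{0,1\}^N$ have the form $$p_{t-1\to t}(\boldsymbol{x},\boldsymbol{y})=\varphi^{\|\boldsymbol{y}\|}\bar\varphi^{N-\|\boldsymbol{y}\|}\Big\{1+\sum_{A\subseteq[N],A\neq\emptyset}\kappa_{t,A}\prod_{k\in A}\Big(1-\frac{\boldsymbol{y}[k]}{\varphi}\Big)\Big(1-\frac{\boldsymbol{x}[k]}{\gamma}\Big)\Big\},\quad \kappa_{t,A}=\Big(\frac{\alpha}{\bar\alpha}\Big)^{|A|}\mathbb{E}\Big[\prod_{k\in A}\Big(1-\frac{Z_t[k]}{\alpha}\Big)\Big],$$ for a random element $Z_t$ of $\{0,1\}^N$ with exchangeable coordinates. Then $\kappa_{t,A}=\tilde\kappa_{t,|A|}$ with $$\tilde\kappa_{t,k}=\Big(\frac{\alpha}{\bar\alpha}\Big)^{k}\mathbb{E}\big[Q_k(\|Z_t\|;N,\alpha)\big],$$ and $$p_{t-1\to t}(\boldsymbol{x},\boldsymbol{y})=\varphi^{\|\boldsymbol{y}\|}\bar\varphi^{N-\|\boldsymbol{y}\|}\Big\{1+\sum_{k=1}^N\binom{N}{k}\tilde\kappa_{t,k}R_k\big(\|\boldsymbol{x}\|,\|\boldsymbol{y}\|,\langle\boldsymbol{x},\boldsymbol{y}\rangle\big)\Big\},$$ where $R_k$ is the coefficient of $\binom{N}{k}s^k$ in $$G_R(\boldsymbol{x},\boldsymbol{y};s)=(1+s)^{N_{00}}\big(1-(\bar\gamma/\gamma)s\big)^{N_{10}}\big(1-(\bar\varphi/\varphi)s\big)^{N_{01}}\big(1+(\bar\varphi\bar\gamma/(\varphi\gamma))s\big)^{N_{11}},$$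 with $N_{ab}=|\{k:\boldsymbol{x}[k]=a,\boldsymbol{y}[k]=b\}|$, so that $N_{00}=N-\|\boldsymbol{x}\|-\|\boldsymbol{y}\|+\langle\boldsymbol{x},\boldsymbol{y}\rangle$, $N_{01}=\|\boldsymbol{y}\|-\langle\boldsymbol{x},\boldsymbol{y}\rangle$, $N_{10}=\|\boldsymbol{x}\|-\langle\boldsymbol{x},\boldsymbol{y}\rangle$, $N_{11}=\langle\boldsymbol{x},\boldsymbol{y}\rangle$.
   Context: $\bar a=1-a$; $[N]=\{1,\dots,N\}$; $\|\boldsymbol{x}\|$ is the number of ones of $\boldsymbol{x}\in\{0,1\}^N$ and $\langle\boldsymbol{x},\boldsymbol{y}\rangle=\sum_k\boldsymbol{x}[k]\boldsymbol{y}[k]$. The Krawtchouk polynomials $Q_n(\zeta;N,a)$, $n=0,\dots,N$, $a\in(0,1)$, are defined by the generating function $\sum_{n=0}^N\binom{N}{n}Q_n(\zeta;N,a)s^n=(1-(\bar a/a)s)^\zeta(1+s)^{N-\zeta}$; they are orthogonal for the Binomial$(N,a)$ distribution with $Q_n(0;N,a)=1$. *)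

theory Defs
  imports "HOL-Probability.Probability" "HOL-Computational_Algebra.Polynomial"
begin

text \<open>Binary vectors x in {0,1}^N are represented as functions nat => nat with
  x k in {0,1} for k in {1..N} and x k = 0 outside {1..N}.\<close>

definition binvec :: "nat \<Rightarrow> (nat \<Rightarrow> nat) \<Rightarrow> bool" where
  "binvec N x \<longleftrightarrow> (\<forall>k. x k \<in> {0,1}) \<and> (\<forall>k. k \<notin> {1..N} \<longrightarrow> x k = 0)"

definition onesv :: "nat \<Rightarrow> (nat \<Rightarrow> nat) \<Rightarrow> nat" where
  "onesv N x = (\<Sum>k\<in>{1..N}. x k)"

definition innerv :: "nat \<Rightarrow> (nat \<Rightarrow> nat) \<Rightarrow> (nat \<Rightarrow> nat) \<Rightarrow> nat" where
  "innerv N x y = (\<Sum>k\<in>{1..N}. x k * y k)"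

text \<open>Krawtchouk polynomial Q_n(zeta;N,a): via the generating function
  sum_n (N choose n) Q_n s^n = (1 - (abar/a) s)^zeta (1+s)^(N-zeta).\<close>
definition krawtchouk :: "nat \<Rightarrow> nat \<Rightarrow> nat \<Rightarrow> real \<Rightarrow> real" where
  "krawtchouk n zeta N a =
     coeff ([:1, -((1 - a) / a):] ^ zeta * [:1, 1:] ^ (N - zeta)) n / real (N choose n)"

text \<open>R_k(|x|,|y|,<x,y>): coefficient of (N choose k) s^k in G_R, with
  N00 = N-u-v+w, N10 = u-w, N01 = v-w, N11 = w.\<close>
definition Rcoef :: "nat \<Rightarrow> real \<Rightarrow> real \<Rightarrow> nat \<Rightarrow> nat \<Rightarrow> nat \<Rightarrow> nat \<Rightarrow> real" where
  "Rcoef N phi gam k u v w =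
     coeff ([:1, 1:] ^ (N + w - u - v)
          * [:1, -((1 - gam) / gam):] ^ (u - w)
          * [:1, -((1 - phi) / phi):] ^ (v - w)
          * [:1, (1 - phi) * (1 - gam) / (phi * gam):] ^ w) k / real (N choose k)"

definition exchangeable_pmf :: "nat \<Rightarrow> (nat \<Rightarrow> nat) pmf \<Rightarrow> bool" where
  "exchangeable_pmf N Z \<longleftrightarrow>
     (\<forall>\<sigma>. \<sigma> permutes {1..N} \<longrightarrow> map_pmf (\<lambda>z. z \<circ> \<sigma>) Z = Z)"

definition kappaA :: "real \<Rightarrow> (nat \<Rightarrow> nat) pmf \<Rightarrow> nat set \<Rightarrow> real" where
  "kappaA \<alpha> Z A = (\<alpha> / (1 - \<alpha>)) ^ card A *
     measure_pmf.expectation Z (\<lambda>z. \<Prod>k\<in>A. (1 - real (z k) / \<alpha>))"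

definition kappat :: "nat \<Rightarrow> real \<Rightarrow> (nat \<Rightarrow> nat) pmf \<Rightarrow> nat \<Rightarrow> real" where
  "kappat N \<alpha> Z k = (\<alpha> / (1 - \<alpha>)) ^ k *
     measure_pmf.expectation Z (\<lambda>z. krawtchouk k (onesv N z) N \<alpha>)"

end

theory Submission
  imports Defs
begin

lemma prod_monom1:
  fixes c :: "nat \<Rightarrow> 'a::comm_ring_1"
  assumes "finite B"
  shows "(\<Prod>k\<in>B. monom (c k) 1) = monom (\<Prod>k\<in>B. c k) (card B)"
  using assms by (induction B rule: finite_induct) (auto simp: mult_monom)

lemma lin_eq: "[:1, c:] = monom c 1 + (1 :: 'a::comm_ring_1 poly)"
  by (rule poly_eqI) (auto simp: coeff_monom coeff_pCons split: nat.split)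

lemma coeff_prod_lin:
  fixes c :: "nat \<Rightarrow> 'a::comm_ring_1"
  assumes "finite S"
  shows "coeff (\<Prod>k\<in>S. [:1, c k:]) n = (\<Sum>B\<in>{B. B \<subseteq> S \<and> card B = n}. \<Prod>k\<in>B. c k)"
proof -
  have "(\<Prod>k\<in>S. [:1, c k:]) = (\<Sum>X\<in>Pow S. monom (\<Prod>k\<in>X. c k) (card X))"
    unfolding lin_eq prod_add[OF assms] using assms
    by (intro sum.cong refl) (simp add: prod_monom1[OF finite_subset[OF _ assms], simplified])
  then have "coeff (\<Prod>k\<in>S. [:1, c k:]) n = (\<Sum>X\<in>Pow S. if card X = n then \<Prod>k\<in>X. c k else 0)"
    by (simp add: coeff_sum coeff_monom)
  also have "\<dots> = (\<Sum>B\<in>{B. B \<subseteq> S \<and> card B = n}. \<Prod>k\<in>B. c k)"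
    using assms by (simp add: sum.If_cases) (intro sum.cong; auto)
  finally show ?thesis .
qed

lemma prod4:
  assumes "finite A" "finite B" "finite C" "finite D"
    "A \<inter> B = {}" "(A \<union> B) \<inter> C = {}" "(A \<union> B \<union> C) \<inter> D = {}"
  shows "prod f (A \<union> B \<union> C \<union> D) = prod f A * prod f B * prod f C * prod f D"
    "sum g (A \<union> B \<union> C \<union> D) = sum g A + sum g B + sum g C + sum g D"
proof -
  have f: "finite (A \<union> B)" "finite (A \<union> B \<union> C)" using assms by auto
  show "prod f (A \<union> B \<union> C \<union> D) = prod f A * prod f B * prod f C * prod f D"
    using prod.union_disjoint[OF f(2) assms(4,7), of f] prod.union_disjoint[OF f(1) assms(3,6), of f]
      prod.union_disjoint[OF assms(1,2,5), of f] by simp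
  show "sum g (A \<union> B \<union> C \<union> D) = sum g A + sum g B + sum g C + sum g D"
    using sum.union_disjoint[OF f(2) assms(4,7), of g] sum.union_disjoint[OF f(1) assms(3,6), of g]
      sum.union_disjoint[OF assms(1,2,5), of g] by simp
qed

lemma four_split:
  fixes x y :: "nat \<Rightarrow> nat"
  assumes "binvec N x" "binvec N y"
    and S_def: "S = (\<lambda>a b. {k\<in>{1..N}. x k = a \<and> y k = b})"
  shows "(\<Prod>k\<in>{1..N}. h (x k) (y k)) = h 0 0 ^ card (S 0 0) * h 1 0 ^ card (S 1 0) * h 0 1 ^ card (S 0 1) * h (1::nat) (1::nat) ^ card (S 1 1)"
    and "(\<Sum>k\<in>{1..N}. g (x k) (y k)) = of_nat (card (S 0 0)) * g 0 0 + of_nat (card (S 1 0)) * g 1 0 + of_nat (card (S 0 1)) * g 0 1 + of_nat (card (S 1 1)) * (g 1 1 :: 'b::comm_semiring_1)"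
proof -
  have xb: "x k = 0 \<or> x k = 1" "y k = 0 \<or> y k = 1" for k
    using assms(1,2) unfolding binvec_def by auto
  have U: "{1..N} = ((S 0 0 \<union> S 1 0) \<union> S 0 1) \<union> S 1 1"
    unfolding S_def using xb by blast
  have fin: "finite (S a b)" for a b unfolding S_def by auto
  have d1: "S 0 0 \<inter> S 1 0 = {}" "(S 0 0 \<union> S 1 0) \<inter> S 0 1 = {}" "((S 0 0 \<union> S 1 0) \<union> S 0 1) \<inter> S 1 1 = {}"
    unfolding S_def by auto
  have P: "(\<Prod>k\<in>S a b. h (x k) (y k)) = h a b ^ card (S a b)" for a b
    by (subst prod.cong[OF refl, where h="\<lambda>_. h a b"]) (auto simp: S_def)
  have Q: "(\<Sum>k\<in>S a b. g (x k) (y k)) = of_nat (card (S a b)) * g a b" for a b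
    by (subst sum.cong[OF refl, where h="\<lambda>_. g a b"]) (auto simp: S_def)
  show "(\<Prod>k\<in>{1..N}. h (x k) (y k)) = h 0 0 ^ card (S 0 0) * h 1 0 ^ card (S 1 0) * h 0 1 ^ card (S 0 1) * h 1 1 ^ card (S 1 1)"
    unfolding U prod4(1)[OF fin fin fin fin d1] P ..
  show "(\<Sum>k\<in>{1..N}. g (x k) (y k)) = of_nat (card (S 0 0)) * g 0 0 + of_nat (card (S 1 0)) * g 1 0 + of_nat (card (S 0 1)) * g 0 1 + of_nat (card (S 1 1)) * g 1 1"
    unfolding U prod4(2)[OF fin fin fin fin d1] Q ..
qed

lemma prod_four:
  fixes h :: "nat \<Rightarrow> nat \<Rightarrow> 'a::comm_monoid_mult"
  assumes "binvec N x" "binvec N y"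
  shows "(\<Prod>k\<in>{1..N}. h (x k) (y k)) = h 0 0 ^ (N + innerv N x y - onesv N x - onesv N y)
     * h 1 0 ^ (onesv N x - innerv N x y) * h 0 1 ^ (onesv N y - innerv N x y) * h 1 1 ^ innerv N x y"
proof -
  define S where "S = (\<lambda>a b. {k\<in>{1..N}. x k = a \<and> y k = b})"
  note F = four_split[OF assms S_def]
  have u: "onesv N x = card (S 1 0) + card (S 1 1)"
    unfolding onesv_def using F(2)[of "\<lambda>a b. a"] by simp
  have v: "onesv N y = card (S 0 1) + card (S 1 1)"
    unfolding onesv_def using F(2)[of "\<lambda>a b. b"] by simp
  have w: "innerv N x y = card (S 1 1)"
    unfolding innerv_def using F(2)[of "\<lambda>a b. a * b"] by simp
  have n: "N = card (S 0 0) + card (S 1 0) + card (S 0 1) + card (S 1 1)"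
    using F(2)[of "\<lambda>a b. 1::nat"] by simp
  have "N + innerv N x y - onesv N x - onesv N y = card (S 0 0)"
    "onesv N x - innerv N x y = card (S 1 0)" "onesv N y - innerv N x y = card (S 0 1)"
    using u v w n by linarith+
  then show ?thesis unfolding F(1) by (simp add: w)
qed

lemma binvec_finite: "finite {z. binvec N z}"
proof -
  have "{z. binvec N z} \<subseteq> (\<lambda>S k. if k \<in> S then 1 else 0) ` Pow {1..N}"
  proof
    fix z assume "z \<in> {z. binvec N z}"
    then have b: "\<forall>k. z k \<in> {0,1}" "\<forall>k. k \<notin> {1..N} \<longrightarrow> z k = 0" by (auto simp: binvec_def)
    have "z = (\<lambda>k. if k \<in> {k\<in>{1..N}. z k = 1} then 1 else 0)"
    proof
      fix k show "z k = (if k \<in> {k\<in>{1..N}. z k = 1} then 1 else 0)"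
        using b[rule_format, of k] by auto
    qed
    then show "z \<in> (\<lambda>S k. if k \<in> S then 1 else 0) ` Pow {1..N}" by blast
  qed
  then show ?thesis by (rule finite_subset) auto
qed

lemma exists_perm:
  assumes "finite S" "A \<subseteq> S" "B \<subseteq> S" "card A = card B"
  shows "\<exists>\<sigma>. \<sigma> permutes S \<and> \<sigma> ` B = A"
proof -
  have fA: "finite A" "finite B" using assms finite_subset by auto
  obtain f where f: "bij_betw f B A" using finite_same_card_bij[OF fA(2) fA(1)] assms(4) by auto
  have "card (S - B) = card (S - A)" using assms fA by (simp add: card_Diff_subset)
  then obtain g where g: "bij_betw g (S - B) (S - A)"
    using finite_same_card_bij[of "S - B" "S - A"] assms(1) by auto
  define \<sigma> where "\<sigma> = (\<lambda>k. if k \<in> B then f k else if k \<in> S then g k else k)"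
  have b1: "bij_betw \<sigma> B A" using f by (rule bij_betw_cong[THEN iffD1, rotated]) (simp add: \<sigma>_def)
  have b2: "bij_betw \<sigma> (S - B) (S - A)" using g by (rule bij_betw_cong[THEN iffD1, rotated]) (simp add: \<sigma>_def)
  have "bij_betw \<sigma> (B \<union> (S - B)) (A \<union> (S - A))" by (rule bij_betw_combine[OF b1 b2]) auto
  moreover have "B \<union> (S - B) = S" "A \<union> (S - A) = S" using assms by auto
  ultimately have "bij_betw \<sigma> S S" by simp
  then have "\<sigma> permutes S" by (rule bij_imp_permutes) (auto simp: \<sigma>_def assms(3)[THEN subsetD])
  moreover have "\<sigma> ` B = A" using b1 by (simp add: bij_betw_def)
  ultimately show ?thesis by blast
qed

lemma exch_integral:
  fixes g :: "(nat \<Rightarrow> nat) \<Rightarrow> real"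
  assumes "exchangeable_pmf N Z" "\<sigma> permutes {1..N}"
  shows "measure_pmf.expectation Z (\<lambda>z. g (z \<circ> \<sigma>)) = measure_pmf.expectation Z g"
proof -
  have "map_pmf (\<lambda>z. z \<circ> \<sigma>) Z = Z" using assms unfolding exchangeable_pmf_def by blast
  then show ?thesis using integral_map_pmf[of "\<lambda>z. z \<circ> \<sigma>" Z g] by simp
qed

lemma same_card_E:
  fixes f :: "nat \<Rightarrow> real"
  assumes "exchangeable_pmf N Z" "A \<subseteq> {1..N}" "B \<subseteq> {1..N}" "card A = card B"
  shows "measure_pmf.expectation Z (\<lambda>z. \<Prod>k\<in>A. f (z k)) = measure_pmf.expectation Z (\<lambda>z. \<Prod>k\<in>B. f (z k))"
proof -
  obtain \<sigma> where s: "\<sigma> permutes {1..N}" "\<sigma> ` B = A" using exists_perm[OF _ assms(2-4)] by auto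
  have inj: "inj_on \<sigma> B" using permutes_inj[OF s(1)] by (auto intro: inj_on_subset)
  have "(\<Prod>k\<in>A. f (z k)) = (\<Prod>k\<in>B. f ((z \<circ> \<sigma>) k))" for z
    unfolding s(2)[symmetric] by (simp add: prod.reindex[OF inj])
  then have "measure_pmf.expectation Z (\<lambda>z. \<Prod>k\<in>A. f (z k)) = measure_pmf.expectation Z (\<lambda>z. (\<lambda>z. \<Prod>k\<in>B. f (z k)) (z \<circ> \<sigma>))"
    by simp
  also have "\<dots> = measure_pmf.expectation Z (\<lambda>z. \<Prod>k\<in>B. f (z k))"
    by (rule exch_integral[OF assms(1) s(1)])
  finally show ?thesis .
qed

lemma innerv_self: "binvec N z \<Longrightarrow> innerv N z z = onesv N z"
  unfolding innerv_def onesv_def binvec_def by (intro sum.cong refl) (metis insert_iff singletonD mult_0 mult_1)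

lemma kraw_sum:
  assumes "binvec N z" "\<alpha> \<noteq> 0"
  shows "krawtchouk n (onesv N z) N \<alpha> * real (N choose n) =
    (\<Sum>B\<in>{B. B \<subseteq> {1..N} \<and> card B = n}. \<Prod>k\<in>B. (1 - real (z k) / \<alpha>))"
proof -
  have "(\<Prod>k\<in>{1..N}. (\<lambda>a b. [:1, 1 - real a / \<alpha>:]) (z k) (z k)) =
     [:1, 1:] ^ (N + innerv N z z - onesv N z - onesv N z) * [:1, 1 - 1 / \<alpha>:] ^ (onesv N z - innerv N z z)
     * [:1, 1:] ^ (onesv N z - innerv N z z) * [:1, 1 - 1 / \<alpha>:] ^ innerv N z z"
    using prod_four[OF assms(1) assms(1), of "\<lambda>a b. [:1, 1 - real a / \<alpha>:]"] by simp
  also have "\<dots> = [:1, -((1 - \<alpha>) / \<alpha>):] ^ onesv N z * [:1, 1:] ^ (N - onesv N z)"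
    using assms by (simp add: innerv_self diff_divide_distrib)
  finally have e: "(\<Prod>k\<in>{1..N}. [:1, 1 - real (z k) / \<alpha>:]) = [:1, -((1 - \<alpha>) / \<alpha>):] ^ onesv N z * [:1, 1:] ^ (N - onesv N z)" by simp
  show ?thesis
  proof (cases "n \<le> N")
    case True
    then show ?thesis unfolding krawtchouk_def using coeff_prod_lin[of "{1..N}" "\<lambda>k. 1 - real (z k) / \<alpha>" n] e
      by simp
  next
    case False
    then have "{B. B \<subseteq> {1..N} \<and> card B = n} = {}"
      by (auto dest: card_mono[OF finite_atLeastAtMost])
    then show ?thesis using False by (metis binomial_eq_0 not_le mult_zero_right of_nat_0 sum.empty)
  qed
qed

theorem proposition7:
  fixes N :: nat and \<phi> \<gamma> \<alpha> :: real
    and Z :: "(nat \<Rightarrow> nat) pmf"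
    and p :: "(nat \<Rightarrow> nat) \<Rightarrow> (nat \<Rightarrow> nat) \<Rightarrow> real"
  assumes "N \<ge> 1"
    and "0 < \<phi>" "\<phi> < 1" "0 < \<gamma>" "\<gamma> < 1" "\<phi> + \<gamma> \<ge> 1"
    and "\<alpha> = min \<phi> \<gamma>"
    and "\<forall>z\<in>set_pmf Z. binvec N z"
    and "exchangeable_pmf N Z"
    and "\<forall>x y. binvec N x \<longrightarrow> binvec N y \<longrightarrow>
       p x y = \<phi> ^ onesv N y * (1 - \<phi>) ^ (N - onesv N y) *
         (1 + (\<Sum>A\<in>{A. A \<subseteq> {1..N} \<and> A \<noteq> {}}. kappaA \<alpha> Z A *
            (\<Prod>k\<in>A. (1 - real (y k) / \<phi>) * (1 - real (x k) / \<gamma>))))"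
  shows "(\<forall>A. A \<subseteq> {1..N} \<and> A \<noteq> {} \<longrightarrow> kappaA \<alpha> Z A = kappat N \<alpha> Z (card A))
    \<and> (\<forall>x y. binvec N x \<longrightarrow> binvec N y \<longrightarrow>
       p x y = \<phi> ^ onesv N y * (1 - \<phi>) ^ (N - onesv N y) *
         (1 + (\<Sum>k=1..N. real (N choose k) * kappat N \<alpha> Z k *
            Rcoef N \<phi> \<gamma> k (onesv N x) (onesv N y) (innerv N x y))))"
proof -
  have a0: "\<alpha> \<noteq> 0" using assms(2,4,7) by auto
  have finZ: "finite (set_pmf Z)" using assms(8) by (intro finite_subset[OF _ binvec_finite[of N]]) blast
  define f where "f = (\<lambda>v::nat. 1 - real v / \<alpha>)"
  have P1: "kappaA \<alpha> Z A = kappat N \<alpha> Z (card A)" if A: "A \<subseteq> {1..N}" for A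
  proof -
    define n where "n = card A"
    have nN: "n \<le> N" unfolding n_def using card_mono[OF finite_atLeastAtMost A] by simp
    define \<B> where "\<B> = {B. B \<subseteq> {1..N} \<and> card B = n}"
    have cB: "card \<B> = N choose n" unfolding \<B>_def using n_subsets[of "{1..N}" n] by simp
    have C0: "real (N choose n) \<noteq> 0" using nN by simp
    have "measure_pmf.expectation Z (\<lambda>z. krawtchouk n (onesv N z) N \<alpha>)
        = measure_pmf.expectation Z (\<lambda>z. (\<Sum>B\<in>\<B>. \<Prod>k\<in>B. f (z k)) / real (N choose n))"
    proof (rule integral_cong_AE)
      show "AE z in measure_pmf Z. krawtchouk n (onesv N z) N \<alpha> = (\<Sum>B\<in>\<B>. \<Prod>k\<in>B. f (z k)) / real (N choose n)"
      proof (rule AE_pmfI)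
        fix z assume "z \<in> set_pmf Z"
        then have "binvec N z" using assms(8) by blast
        from kraw_sum[OF this a0, of n] C0 show "krawtchouk n (onesv N z) N \<alpha> = (\<Sum>B\<in>\<B>. \<Prod>k\<in>B. f (z k)) / real (N choose n)"
          unfolding \<B>_def f_def by (simp add: field_simps)
      qed
    qed auto
    also have "\<dots> = (\<Sum>B\<in>\<B>. measure_pmf.expectation Z (\<lambda>z. \<Prod>k\<in>B. f (z k))) / real (N choose n)"
      by (simp add: integral_sum integrable_measure_pmf_finite[OF finZ])
    also have "\<dots> = (\<Sum>B\<in>\<B>. measure_pmf.expectation Z (\<lambda>z. \<Prod>k\<in>A. f (z k))) / real (N choose n)"
      using A by (intro arg_cong2[where f="(/)"] sum.cong refl same_card_E[OF assms(9)]) (auto simp: \<B>_def n_def)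
    also have "\<dots> = measure_pmf.expectation Z (\<lambda>z. \<Prod>k\<in>A. f (z k))"
      using C0 cB by simp
    finally show ?thesis unfolding kappaA_def kappat_def n_def f_def by simp
  qed
  have P2: "p x y = \<phi> ^ onesv N y * (1 - \<phi>) ^ (N - onesv N y) *
         (1 + (\<Sum>k=1..N. real (N choose k) * kappat N \<alpha> Z k *
            Rcoef N \<phi> \<gamma> k (onesv N x) (onesv N y) (innerv N x y)))"
    if x: "binvec N x" and y: "binvec N y" for x y
  proof -
    define c where "c = (\<lambda>k. (1 - real (y k) / \<phi>) * (1 - real (x k) / \<gamma>))"
    define \<S> where "\<S> = {A. A \<subseteq> {1..N} \<and> A \<noteq> {}}"
    define h where "h = (\<lambda>a b. [:1, (1 - real b / \<phi>) * (1 - real a / \<gamma>):])"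
    have hp: "(\<Prod>k\<in>{1..N}. [:1, c k:]) = [:1, 1:] ^ (N + innerv N x y - onesv N x - onesv N y)
          * [:1, -((1 - \<gamma>) / \<gamma>):] ^ (onesv N x - innerv N x y)
          * [:1, -((1 - \<phi>) / \<phi>):] ^ (onesv N y - innerv N x y)
          * [:1, (1 - \<phi>) * (1 - \<gamma>) / (\<phi> * \<gamma>):] ^ innerv N x y"
    proof -
      have "(\<Prod>k\<in>{1..N}. [:1, c k:]) = (\<Prod>k\<in>{1..N}. h (x k) (y k))" by (simp add: c_def h_def)
      also have "\<dots> = h 0 0 ^ (N + innerv N x y - onesv N x - onesv N y)
     * h 1 0 ^ (onesv N x - innerv N x y) * h 0 1 ^ (onesv N y - innerv N x y) * h 1 1 ^ innerv N x y"
        by (rule prod_four[OF x y])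
      also have "h 0 0 = [:1, 1:]" by (simp add: h_def)
      also have "h 1 0 = [:1, -((1 - \<gamma>) / \<gamma>):]" using assms(4) by (simp add: h_def field_simps)
      also have "h 0 1 = [:1, -((1 - \<phi>) / \<phi>):]" using assms(2) by (simp add: h_def field_simps)
      also have "h 1 1 = [:1, (1 - \<phi>) * (1 - \<gamma>) / (\<phi> * \<gamma>):]" using assms(2,4) by (simp add: h_def field_simps)
      finally show ?thesis .
    qed
    have co: "coeff (\<Prod>k\<in>{1..N}. [:1, c k:]) n = real (N choose n) * Rcoef N \<phi> \<gamma> n (onesv N x) (onesv N y) (innerv N x y)"
      if "n \<in> {1..N}" for n
      using that unfolding Rcoef_def hp by simp
    have finS: "finite \<S>" unfolding \<S>_def by (rule finite_subset[of _ "Pow {1..N}"]) auto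
    have cardS: "card ` \<S> \<subseteq> {1..N}"
    proof (rule image_subsetI)
      fix A assume "A \<in> \<S>"
      then have A: "A \<subseteq> {1..N}" "A \<noteq> {}" unfolding \<S>_def by auto
      have fA: "finite A" by (rule finite_subset[OF A(1)]) simp
      have "card A \<ge> 1" using fA A(2) by (simp add: Suc_le_eq card_gt_0_iff)
      moreover have "card A \<le> N" using card_mono[OF _ A(1)] by simp
      ultimately show "card A \<in> {1..N}" by simp
    qed
    have "(\<Sum>A\<in>\<S>. kappaA \<alpha> Z A * prod c A) = (\<Sum>A\<in>\<S>. kappat N \<alpha> Z (card A) * prod c A)"
      by (intro sum.cong refl) (simp add: P1 \<S>_def)
    also have "\<dots> = (\<Sum>n\<in>{1..N}. \<Sum>A\<in>{A\<in>\<S>. card A = n}. kappat N \<alpha> Z (card A) * prod c A)"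
      by (rule sum.group[symmetric, OF finS _ cardS]) simp
    also have "\<dots> = (\<Sum>n\<in>{1..N}. kappat N \<alpha> Z n * coeff (\<Prod>k\<in>{1..N}. [:1, c k:]) n)"
    proof (intro sum.cong refl)
      fix n assume n: "n \<in> {1..N}"
      have "{A\<in>\<S>. card A = n} = {B. B \<subseteq> {1..N} \<and> card B = n}"
        using n unfolding \<S>_def by auto
      then show "(\<Sum>A\<in>{A\<in>\<S>. card A = n}. kappat N \<alpha> Z (card A) * prod c A) = kappat N \<alpha> Z n * coeff (\<Prod>k\<in>{1..N}. [:1, c k:]) n"
        by (simp add: coeff_prod_lin sum_distrib_left)
    qed
    also have "\<dots> = (\<Sum>k=1..N. real (N choose k) * kappat N \<alpha> Z k *
            Rcoef N \<phi> \<gamma> k (onesv N x) (onesv N y) (innerv N x y))"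
    proof (intro sum.cong refl)
      fix n assume "n \<in> {1..N}"
      then show "kappat N \<alpha> Z n * coeff (\<Prod>k\<in>{1..N}. [:1, c k:]) n = real (N choose n) * kappat N \<alpha> Z n *
            Rcoef N \<phi> \<gamma> n (onesv N x) (onesv N y) (innerv N x y)"
        unfolding co[OF \<open>n \<in> {1..N}\<close>] by simp
    qed
    finally show ?thesis using assms(10) x y unfolding \<S>_def c_def by simp
  qed
  show ?thesis using P1 P2 by blast
qed
end
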